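(* Let $s,k\geq 2$. Then the $s$-stable Kneser graph $\operatorname{KG}(ks+1,k)_{s-\operatorname{stab}}$ is hom-idempotent, i.e., there is a homomorphism from $\operatorname{KG}(ks+1,k)_{s-\operatorname{stab}}\Box\operatorname{KG}(ks+1,k)_{s-\operatorname{stab}}$ to $\operatorname{KG}(ks+1,k)_{s-\operatorname{stab}}$.
   Context: For integers $s,k\geq 2$ and $n\geq ks$, a subset $S\subseteq[n]=\{1,\dots,n\}$ is $s$-stable if $s\leq |i-j|\leq n-s$ for all distinct $i,j\in S$. The $s$-stable Kneser graph $\operatorname{KG}(n,k)_{s-\operatorname{stab}}$ has as vertices the $s$-stable $k$-subsets of $[n]$, two vertices being adjacent iff they are disjoint. $G\Box H$ denotes the cartesian product of graphs (vertex set $V(G)\times V(H)$, $(g,h)\sim(g',h')$ iff one coordinate is equal and the other coordinates are adjacent). A homomorphism is an edge-preserving map between vertex sets. *)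

theory Defs
  imports Main
begin

definition s_stable :: "nat \<Rightarrow> nat \<Rightarrow> nat set \<Rightarrow> bool" where
  "s_stable n s S \<longleftrightarrow> S \<subseteq> {1..n} \<and>
     (\<forall>i\<in>S. \<forall>j\<in>S. i \<noteq> j \<longrightarrow>
        s \<le> nat \<bar>int i - int j\<bar> \<and> nat \<bar>int i - int j\<bar> \<le> n - s)"

definition stab_kneser_vertices :: "nat \<Rightarrow> nat \<Rightarrow> nat \<Rightarrow> nat set set" where
  "stab_kneser_vertices n k s = {S. s_stable n s S \<and> card S = k}"

definition stab_kneser_adj :: "nat set \<Rightarrow> nat set \<Rightarrow> bool" where
  "stab_kneser_adj A B \<longleftrightarrow> A \<inter> B = {}"

definition box_vertices :: "'a set \<Rightarrow> 'b set \<Rightarrow> ('a \<times> 'b) set" where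
  "box_vertices V W = V \<times> W"

definition box_adj :: "('a \<Rightarrow> 'a \<Rightarrow> bool) \<Rightarrow> ('b \<Rightarrow> 'b \<Rightarrow> bool) \<Rightarrow> 'a \<times> 'b \<Rightarrow> 'a \<times> 'b \<Rightarrow> bool" where
  "box_adj E F p q \<longleftrightarrow>
     (fst p = fst q \<and> F (snd p) (snd q)) \<or> (snd p = snd q \<and> E (fst p) (fst q))"

definition graph_hom :: "'a set \<Rightarrow> ('a \<Rightarrow> 'a \<Rightarrow> bool) \<Rightarrow> 'b set \<Rightarrow> ('b \<Rightarrow> 'b \<Rightarrow> bool) \<Rightarrow> ('a \<Rightarrow> 'b) \<Rightarrow> bool" where
  "graph_hom V E W F f \<longleftrightarrow> (\<forall>x\<in>V. f x \<in> W) \<and> (\<forall>x\<in>V. \<forall>y\<in>V. E x y \<longrightarrow> F (f x) (f y))"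

end

theory Submission
  imports Defs
begin

lemma canc: "(x + c) mod n = (y + c) mod (n::nat) \<Longrightarrow> x mod n = y mod n"
  by (simp add: nat_mod_eq_iff)

lemma absG:
  fixes x y r n s :: nat
  assumes "x < n" "y < n" "x = (y+r) mod n" "s \<le> r" "r \<le> n - s" "r < n"
  shows "s \<le> nat \<bar>int x - int y\<bar> \<and> nat \<bar>int x - int y\<bar> \<le> n - s"
proof (cases "y + r < n")
  case True
  then have "x = y + r" using assms by simp
  then show ?thesis using assms by simp
next
  case False
  have "y + r - n < n" using assms by simp
  then have "x = y + r - n" using assms False by (simp add: le_mod_geq)
  then show ?thesis using assms False by auto
qed

lemma absH:
  fixes x y r n s :: nat
  assumes "x < n" "y < n" "s \<le> nat \<bar>int x - int y\<bar>" "nat \<bar>int x - int y\<bar> \<le> n - s"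
    "0 < r" "r < s"
  shows "x \<noteq> (y+r) mod n"
proof
  assume x: "x = (y+r) mod n"
  show False
  proof (cases "y + r < n")
    case True
    then have "x = y + r" using x by simp
    then show ?thesis using assms by simp
  next
    case False
    then have "y + r < 2*n" using assms by simp
    then have "y + r - n < n" by simp
    then have "x = y + r - n" using x False by (simp add: le_mod_geq)
    then show ?thesis using assms False by auto
  qed
qed

definition Pos :: "nat \<Rightarrow> nat \<Rightarrow> nat \<Rightarrow> nat \<Rightarrow> nat set" where
  "Pos n s k a = (\<lambda>j. (a + j*s) mod n) ` {..<k}"

definition Pset :: "nat \<Rightarrow> nat \<Rightarrow> nat \<Rightarrow> nat \<Rightarrow> nat set" where
  "Pset n s k a = Suc ` Pos n s k a"

lemma cardPos:
  assumes "s \<ge> 1" "n = k*s+1"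
  shows "card (Pos n s k a) = k"
proof -
  have "inj_on (\<lambda>j. (a + j*s) mod n) {..<k}"
  proof
    fix j j' assume j: "j \<in> {..<k}" "j' \<in> {..<k}" and e: "(a + j*s) mod n = (a + j'*s) mod n"
    then have "(j*s + a) mod n = (j'*s + a) mod n" by (simp add: add.commute)
    then have "(j*s) mod n = (j'*s) mod n" by (rule canc)
    moreover have "j*s < n" "j'*s < n" using j assms by (auto intro: le_less_trans[of _ "k*s"])
    ultimately have "j*s = j'*s" by simp
    then show "j = j'" using assms by simp
  qed
  then show ?thesis unfolding Pos_def by (simp add: card_image)
qed

lemma L1:
  assumes s1: "s \<ge> 1" and k1: "k \<ge> 1" and nd: "n = k*s+1"
  shows "Pset n s k a \<in> stab_kneser_vertices n k s"
proof -
  have c: "card (Pset n s k a) = k"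
    unfolding Pset_def using cardPos[OF s1 nd] by (simp add: card_image)
  have sub: "Pset n s k a \<subseteq> {1..n}"
    unfolding Pset_def Pos_def using nd by auto
  have key: "s \<le> nat \<bar>int (Suc ((a + j*s) mod n)) - int (Suc ((a + j'*s) mod n))\<bar> \<and>
      nat \<bar>int (Suc ((a + j*s) mod n)) - int (Suc ((a + j'*s) mod n))\<bar> \<le> n - s"
    if "j' < j" "j < k" for j j'
  proof -
    define d where "d = j - j'"
    have d: "1 \<le> d" "d \<le> k - 1" using that d_def by auto
    have r1: "s \<le> d*s" using d by simp
    have "d*s \<le> (k-1)*s" using d by simp
    then have r2: "d*s \<le> n - s" "d * s < n" using nd k1 by (auto simp: diff_mult_distrib)
    have "j*s = j'*s + d*s" using that by (simp add: d_def add_mult_distrib[symmetric])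
    then have "(a + j*s) mod n = ((a + j'*s) mod n + d*s) mod n"
      by (simp add: mod_add_left_eq add.assoc)
    from absG[OF _ _ this r1 r2] nd
    show ?thesis by simp
  qed
  have st: "s_stable n s (Pset n s k a)"
    unfolding s_stable_def
  proof (rule conjI[OF sub], intro ballI impI)
    fix x y assume x: "x \<in> Pset n s k a" and y: "y \<in> Pset n s k a" and ne: "x \<noteq> y"
    obtain j where j: "j < k" "x = Suc ((a + j*s) mod n)" using x unfolding Pset_def Pos_def by auto
    obtain j' where j': "j' < k" "y = Suc ((a + j'*s) mod n)" using y unfolding Pset_def Pos_def by auto
    have "j \<noteq> j'" using ne j j' by auto
    then consider "j' < j" | "j < j'" by linarith
    then show "s \<le> nat \<bar>int x - int y\<bar> \<and> nat \<bar>int x - int y\<bar> \<le> n - s"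
    proof cases
      case 1 then show ?thesis using key[of j' j] j j' by simp
    next
      case 2 then show ?thesis using key[of j j'] j j' by (simp add: abs_minus_commute)
    qed
  qed
  show ?thesis using c st unfolding stab_kneser_vertices_def by simp
qed

lemma L2:
  assumes s1: "s \<ge> 1" and k2: "k \<ge> 2" and nd: "n = k*s+1"
    and B: "B \<in> stab_kneser_vertices n k s"
  shows "\<exists>a. B = Pset n s k a"
proof -
  from B have Bsub: "B \<subseteq> {1..n}" and cB: "card B = k"
    and st: "\<forall>i\<in>B. \<forall>j\<in>B. i\<noteq>j \<longrightarrow> s \<le> nat\<bar>int i - int j\<bar> \<and> nat\<bar>int i - int j\<bar> \<le> n - s"
    by (auto simp: stab_kneser_vertices_def s_stable_def)
  have finB: "finite B" using cB k2 card.infinite by fastforce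
  define Q where "Q = (\<lambda>x. x - 1) ` B"
  have BQ: "B = Suc ` Q"
  proof -
    have "Suc ` Q = (\<lambda>x. Suc (x - 1)) ` B" unfolding Q_def by (simp add: image_image)
    also have "\<dots> = (\<lambda>x. x) ` B" using Bsub by (intro image_cong) auto
    also have "\<dots> = B" by simp
    finally show ?thesis by simp
  qed
  have Qlt: "\<And>q. q\<in>Q \<Longrightarrow> q < n" using Bsub unfolding Q_def by (auto dest!: subsetD)
  have finQ: "finite Q" using finB by (simp add: Q_def)
  have cQ: "card Q = k" using cB BQ by (simp add: card_image)
  have forb: "q \<noteq> (q'+r) mod n" if "q\<in>Q" "q'\<in>Q" "0<r" "r<s" for q q' r
  proof
    assume e: "q = (q'+r) mod n"
    show False
    proof (cases "q = q'")
      case True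
      then have "(r + q') mod n = (0 + q') mod n" using e Qlt[OF that(1)] by (simp add: add.commute)
      then have "r mod n = 0 mod n" by (rule canc)
      moreover have "r < n" using that nd s1 k2 by (metis le_add1 less_le_trans mult_le_mono1 mult_1 one_le_numeral less_SucI le_trans Suc_eq_plus1 add.commute mult.commute mult_le_mono2)
      ultimately show False using that by simp
    next
      case False
      then have "Suc q \<noteq> Suc q'" by simp
      moreover have "Suc q \<in> B" "Suc q' \<in> B" using that BQ by auto
      ultimately have "s \<le> nat\<bar>int (Suc q) - int (Suc q')\<bar> \<and> nat\<bar>int (Suc q) - int (Suc q')\<bar> \<le> n - s"
        using st by blast
      then have "s \<le> nat\<bar>int q - int q'\<bar>" "nat\<bar>int q - int q'\<bar> \<le> n - s" by simp_all
      from absH[OF Qlt[OF that(1)] Qlt[OF that(2)] this that(3,4)] e show False by simp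
    qed
  qed
  have uniq0: "q = q' \<and> r = r'" if "q\<in>Q" "q'\<in>Q" "r<s" "r'<s" "r \<le> r'"
      "(q+r) mod n = (q'+r') mod n" for q q' r r'
  proof -
    have "(q+r) mod n = ((q' + (r'-r)) + r) mod n" using that by simp
    then have e: "q mod n = (q' + (r'-r)) mod n" by (rule canc)
    then have e2: "q = (q' + (r'-r)) mod n" using Qlt[OF that(1)] by simp
    have "r' = r"
    proof (rule ccontr)
      assume "r' \<noteq> r"
      then have "0 < r' - r" "r' - r < s" using that by auto
      from forb[OF that(1,2) this] e2 show False by simp
    qed
    then show ?thesis using e2 Qlt[OF that(2)] by simp
  qed
  have uniq: "q = q' \<and> r = r'" if "q\<in>Q" "q'\<in>Q" "r<s" "r'<s"
      "(q+r) mod n = (q'+r') mod n" for q q' r r'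
  proof (cases "r \<le> r'")
    case True then show ?thesis using uniq0 that by blast
  next
    case False then show ?thesis using uniq0[of q' q r' r] that by auto
  qed
  define Arc where "Arc q = (\<lambda>r. (q+r) mod n) ` {..<s}" for q
  have cArc: "card (Arc q) = s" if "q \<in> Q" for q
  proof -
    have "inj_on (\<lambda>r. (q+r) mod n) {..<s}"
      by (rule inj_onI) (use uniq that in auto)
    then show ?thesis unfolding Arc_def by (simp add: card_image)
  qed
  define U where "U = \<Union> (Arc ` Q)"
  have cU: "card U = k*s"
  proof -
    have "card U = (\<Sum>q\<in>Q. card (Arc q))" unfolding U_def
      by (rule card_UN_disjoint) (use finQ uniq in \<open>auto simp: Arc_def\<close>)
    also have "\<dots> = k*s" using cArc cQ by simp
    finally show ?thesis .
  qed
  have Usub: "U \<subseteq> {..<n}" unfolding U_def Arc_def using nd by auto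
  have "card ({..<n} - U) = 1" using cU Usub nd
    by (simp add: card_Diff_subset finite_subset)
  then obtain u where u: "{..<n} - U = {u}" by (rule card_1_singletonE)
  have un: "u < n" "u \<notin> U" using u by auto
  have cov: "v \<in> U" if "v < n" "v \<noteq> u" for v using u that by auto
  have inU: "\<exists>q r. q \<in> Q \<and> r < s \<and> v = (q + r) mod n" if "v \<in> U" for v
    using that unfolding U_def Arc_def by auto
  have uArc: "(q + r) mod n \<noteq> u" if "q \<in> Q" "r < s" for q r
    using un(2) that unfolding U_def Arc_def by auto
  define a where "a = (u+1) mod n"
  have n2: "n \<ge> 2" using nd mult_le_mono[OF k2 s1] s1 k2 by linarith
  have claim: "j < k \<longrightarrow> (a + j*s) mod n \<in> Q" for j
  proof (induction j)
    case 0
    have an: "a < n" using n2 by (simp add: a_def)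
    have "a \<noteq> u"
    proof
      assume "a = u"
      then have "(1 + u) mod n = (0 + u) mod n" using un by (simp add: a_def add.commute)
      then have "1 mod n = 0 mod n" by (rule canc)
      then show False using n2 by simp
    qed
    then obtain q r where qr: "q \<in> Q" "r < s" "a = (q+r) mod n" using inU cov an by blast
    have "r = 0"
    proof (rule ccontr)
      assume "r \<noteq> 0"
      then have "(q + (r-1) + 1) mod n = (u + 1) mod n" using qr by (simp add: a_def)
      then have "(q + (r-1)) mod n = u mod n" by (rule canc)
      moreover have "r - 1 < s" using qr by simp
      ultimately show False using uArc[OF qr(1), of "r-1"] un by simp
    qed
    then show ?case using qr Qlt an by simp
  next
    case (Suc j)
    show ?case
    proof
      assume jk: "Suc j < k"
      define q0 where "q0 = (a + j*s) mod n"
      have q0: "q0 \<in> Q" using Suc jk q0_def by simp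
      define p where "p = (a + Suc j * s) mod n"
      have pn: "p < n" using n2 by (simp add: p_def)
      have pq0: "p = (q0 + s) mod n" unfolding p_def q0_def mod_add_left_eq by (simp add: algebra_simps)
      have "Suc j * s \<le> (k-1)*s" using jk by (intro mult_le_mono1) simp
      then have lt: "1 + Suc j * s < n" using nd s1 k2 by (simp add: diff_mult_distrib)
      have "p \<noteq> u"
      proof
        assume "p = u"
        moreover have "p = ((1 + Suc j*s) + u) mod n"
          unfolding p_def a_def mod_add_left_eq by (simp add: algebra_simps)
        ultimately have "((1 + Suc j*s) + u) mod n = (0 + u) mod n" using un by simp
        then have "(1 + Suc j*s) mod n = 0 mod n" by (rule canc)
        then show False using lt by simp
      qed
      then obtain q r where qr: "q \<in> Q" "r < s" "p = (q+r) mod n" using inU cov pn by blast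
      have "r = 0"
      proof (rule ccontr)
        assume "r \<noteq> 0"
        then have "(q + (r-1) + 1) mod n = (q0 + (s-1) + 1) mod n" using qr pq0 s1 by simp
        then have "(q + (r-1)) mod n = (q0 + (s-1)) mod n" by (rule canc)
        then have "r - 1 = s - 1" using uniq[OF qr(1) q0, of "r-1" "s-1"] qr s1 by simp
        then show False using qr \<open>r \<noteq> 0\<close> by simp
      qed
      then show "(a + Suc j * s) mod n \<in> Q" using qr Qlt p_def by simp
    qed
  qed
  have "Pos n s k a \<subseteq> Q" unfolding Pos_def using claim by auto
  then have "Pos n s k a = Q" using finQ cQ cardPos[OF s1 nd] by (simp add: card_subset_eq)
  then show ?thesis using BQ unfolding Pset_def by auto
qed

lemma Ttrans:
  assumes "Pset n s k x \<inter> Pset n s k y = {}"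
  shows "Pset n s k ((x+c) mod n) \<inter> Pset n s k ((y+c) mod n) = {}"
proof (rule ccontr)
  assume "Pset n s k ((x+c) mod n) \<inter> Pset n s k ((y+c) mod n) \<noteq> {}"
  then obtain j j' where j: "j < k" "j' < k"
    and e: "((x+c) mod n + j*s) mod n = ((y+c) mod n + j'*s) mod n"
    unfolding Pset_def Pos_def by auto
  then have "((x + c) + j*s) mod n = ((y + c) + j'*s) mod n"
    by (metis mod_add_left_eq)
  then have "((x + j*s) + c) mod n = ((y + j'*s) + c) mod n"
    by (simp add: algebra_simps)
  then have "(x + j*s) mod n = (y + j'*s) mod n" by (rule canc)
  moreover have "Suc ((x + j*s) mod n) \<in> Pset n s k x"
    using j unfolding Pset_def Pos_def by auto
  moreover have "Suc ((y + j'*s) mod n) \<in> Pset n s k y"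
    using j unfolding Pset_def Pos_def by auto
  ultimately have "Suc ((x + j*s) mod n) \<in> Pset n s k x \<inter> Pset n s k y" by simp
  then show False using assms by simp
qed

theorem mainTheorem2:
  fixes s k :: nat
  assumes "s \<ge> 2" and "k \<ge> 2"
  shows "\<exists>f. graph_hom
            (box_vertices (stab_kneser_vertices (k*s+1) k s) (stab_kneser_vertices (k*s+1) k s))
            (box_adj stab_kneser_adj stab_kneser_adj)
            (stab_kneser_vertices (k*s+1) k s) stab_kneser_adj f"
proof -
  define n where "n = k*s+1"
  define V where "V = stab_kneser_vertices n k s"
  define pa where "pa X = (SOME a. X = Pset n s k a)" for X
  have s1: "s \<ge> 1" and k1: "k \<ge> 1" using assms by auto
  have pa: "X = Pset n s k (pa X)" if "X \<in> V" for X
    unfolding pa_def by (rule someI_ex) (use L2[OF s1 assms(2) n_def] that V_def in auto)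
  define f where "f p = Pset n s k ((pa (fst p) + pa (snd p)) mod n)" for p
  have "graph_hom (box_vertices V V) (box_adj stab_kneser_adj stab_kneser_adj) V stab_kneser_adj f"
    unfolding graph_hom_def
  proof (intro conjI ballI impI)
    fix x assume "x \<in> box_vertices V V"
    show "f x \<in> V" unfolding f_def V_def by (rule L1[OF s1 k1 n_def])
  next
    fix x y assume x: "x \<in> box_vertices V V" and y: "y \<in> box_vertices V V"
      and e: "box_adj stab_kneser_adj stab_kneser_adj x y"
    from e consider "fst x = fst y" "snd x \<inter> snd y = {}" | "snd x = snd y" "fst x \<inter> fst y = {}"
      unfolding box_adj_def stab_kneser_adj_def by blast
    then show "stab_kneser_adj (f x) (f y)"
    proof cases
      case 1
      have "Pset n s k (pa (snd x)) \<inter> Pset n s k (pa (snd y)) = {}"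
        using 1 pa x y unfolding box_vertices_def by (metis mem_Times_iff)
      from Ttrans[OF this, of "pa (fst x)"] 1 show ?thesis
        unfolding stab_kneser_adj_def f_def by (simp add: add.commute)
    next
      case 2
      have "Pset n s k (pa (fst x)) \<inter> Pset n s k (pa (fst y)) = {}"
        using 2 pa x y unfolding box_vertices_def by (metis mem_Times_iff)
      from Ttrans[OF this, of "pa (snd x)"] 2 show ?thesis
        unfolding stab_kneser_adj_def f_def by simp
    qed
  qed
  then show ?thesis unfolding V_def n_def by blast
qed

end
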